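(* Let $z=(z_1,\ldots,z_n)$ be a sequence of nonnegative real numbers, and let $f_z(a)=\sum_{i=1}^n |z_i-a_i|$ for $a\in\mathbb{R}^n$. Let $d\in DS_n$ be a minimizer of $f_z$ over $DS_n$. Then there exists $d^*\in DS_n$ such that $d^*_i\le \lceil z_i\rceil$ for all $i$ and $f_z(d^* )=f_z(d)$.
   Context: All graphs are simple (no loops, no multiple edges) on the vertex set $\{1,\ldots,n\}$. The degree sequence of such a graph is the vector $(d_1,\ldots,d_n)$ where $d_i$ is the number of neighbours of vertex $i$. $DS_n$ denotes the set of all degree sequences of simple graphs on $\{1,\ldots,n\}$. $\lceil x\rceil$ is the ceiling of $x$. *)

theory Defs
  imports Complex_Main
begin

definition simple_graph :: "nat \<Rightarrow> nat set set \<Rightarrow> bool" where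
  "simple_graph n E \<longleftrightarrow> (\<forall>e\<in>E. e \<subseteq> {1..n} \<and> card e = 2)"

definition degree :: "nat set set \<Rightarrow> nat \<Rightarrow> nat" where
  "degree E i = card {e\<in>E. i \<in> e}"

(* DS_n: degree sequences (d_1,...,d_n), represented as functions nat => nat
   (values outside {1..n} are 0 automatically, as no edge contains such a vertex). *)
definition DS :: "nat \<Rightarrow> (nat \<Rightarrow> nat) set" where
  "DS n = {degree E | E. simple_graph n E}"

definition fz :: "nat \<Rightarrow> (nat \<Rightarrow> real) \<Rightarrow> (nat \<Rightarrow> real) \<Rightarrow> real" where
  "fz n z a = (\<Sum>i=1..n. \<bar>z i - a i\<bar>)"

end

theory Submission
  imports Defs
begin

lemma sg_finite: "simple_graph n E \<Longrightarrow> finite E"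
  by (rule finite_subset[of E "Pow {1..n}"]) (auto simp: simple_graph_def)

lemma deg_remove:
  assumes "finite E" "e \<in> E"
  shows "degree (E - {e}) k = (if k \<in> e then degree E k - 1 else degree E k)"
proof (cases "k \<in> e")
  case True
  have "{x\<in>E-{e}. k\<in>x} = {x\<in>E. k\<in>x} - {e}" by auto
  moreover have "e \<in> {x\<in>E. k\<in>x}" using True assms by auto
  ultimately show ?thesis using True assms unfolding degree_def
    by (simp add: card_Diff_singleton)
next
  case False
  have "{x\<in>E-{e}. k\<in>x} = {x\<in>E. k\<in>x}" using False by auto
  then show ?thesis using False unfolding degree_def by simp
qed

lemma deg_pos:
  assumes "finite E" "e \<in> E" "k \<in> e"
  shows "degree E k \<ge> 1"
proof -
  have "{x\<in>E. k\<in>x} \<noteq> {}" using assms by auto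
  then show ?thesis unfolding degree_def using assms(1)
    by (simp add: Suc_le_eq card_gt_0_iff)
qed

lemma step:
  assumes sg: "simple_graph n E" and i: "i \<in> {1..n}" and zi: "z i \<ge> 0"
    and big: "\<not> real (degree E i) \<le> of_int \<lceil>z i\<rceil>"
  shows "\<exists>E'. simple_graph n E' \<and> card E' < card E
            \<and> fz n z (\<lambda>k. real (degree E' k)) \<le> fz n z (\<lambda>k. real (degree E k))"
proof -
  have fin: "finite E" using sg by (rule sg_finite)
  have "of_int \<lceil>z i\<rceil> \<ge> (0::real)" using zi by simp
  then have "degree E i > 0" using big by linarith
  then have "{x\<in>E. i\<in>x} \<noteq> {}" unfolding degree_def by (metis card.empty less_irrefl)
  then obtain e where e: "e \<in> E" "i \<in> e" by auto
  have "card e = 2" "e \<subseteq> {1..n}" using sg e unfolding simple_graph_def by auto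
  then obtain x y where xy: "e = {x,y}" "x \<noteq> y" by (auto simp: card_2_iff)
  then obtain j where j: "e = {i,j}" "i \<noteq> j" using e(2) by auto
  have jn: "j \<in> {1..n}" using \<open>e \<subseteq> {1..n}\<close> j by auto
  define E' where "E' = E - {e}"
  have sg': "simple_graph n E'" using sg unfolding E'_def simple_graph_def by auto
  have cl: "card E' < card E" unfolding E'_def using fin e by (meson card_Diff1_less)
  have dj: "degree E j \<ge> 1" using deg_pos[OF fin e(1)] j by auto
  have tineq: "\<bar>z k - real (degree E' k)\<bar> \<le> \<bar>z k - real (degree E k)\<bar>
      + (if k = j then 1 else 0) - (if k = i then 1 else 0)" for k
  proof -
    have D: "degree E' k = (if k \<in> e then degree E k - 1 else degree E k)"
      unfolding E'_def by (rule deg_remove[OF fin e(1)])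
    show ?thesis
    proof (cases "k = i")
      case True
      have c1: "int (degree E i) > \<lceil>z i\<rceil>" using big
        by (metis not_le of_int_le_iff of_int_of_nat_eq)
      have "real_of_int (int (degree E i)) \<ge> real_of_int (\<lceil>z i\<rceil> + 1)"
        using c1 by (simp only: of_int_le_iff)
      then have "real (degree E i) \<ge> of_int \<lceil>z i\<rceil> + 1" by simp
      moreover have "of_int \<lceil>z i\<rceil> \<ge> z i" by simp
      moreover have "real (degree E i - 1) = real (degree E i) - 1"
        using \<open>degree E i > 0\<close> by (simp add: of_nat_diff)
      ultimately have "z i \<le> real (degree E i) - 1" "real (degree E' i) = real (degree E i) - 1"
        using D e True by (linarith, simp)
      then show ?thesis using True j by auto
    next
      case False
      show ?thesis
      proof (cases "k = j")
        case True
        have "real (degree E j - 1) = real (degree E j) - 1" using dj by (simp add: of_nat_diff)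
        then show ?thesis using True False D j by auto
      next
        case False2: False
        then show ?thesis using False D j by auto
      qed
    qed
  qed
  have "fz n z (\<lambda>k. real (degree E' k)) \<le> (\<Sum>k=1..n. \<bar>z k - real (degree E k)\<bar>
      + (if k = j then 1 else 0) - (if k = i then 1 else 0))"
    unfolding fz_def by (rule sum_mono) (rule tineq)
  also have "\<dots> = fz n z (\<lambda>k. real (degree E k)) + 1 - 1"
    using i jn by (simp add: fz_def sum.distrib sum_subtractf)
  finally show ?thesis using sg' cl by auto
qed

theorem lemma5:
  fixes n :: nat and z :: "nat \<Rightarrow> real" and d :: "nat \<Rightarrow> nat"
  assumes nonneg: "\<forall>i\<in>{1..n}. z i \<ge> 0"
    and dDS: "d \<in> DS n"
    and dmin: "\<forall>a\<in>DS n. fz n z (\<lambda>i. real (d i)) \<le> fz n z (\<lambda>i. real (a i))"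
  shows "\<exists>d'\<in>DS n. (\<forall>i\<in>{1..n}. real (d' i) \<le> of_int \<lceil>z i\<rceil>)
           \<and> fz n z (\<lambda>i. real (d' i)) = fz n z (\<lambda>i. real (d i))"
proof -
  obtain E0 where E0: "d = degree E0" "simple_graph n E0" using dDS unfolding DS_def by auto
  have main: "\<And>E. card E = m \<Longrightarrow> simple_graph n E \<Longrightarrow>
      fz n z (\<lambda>i. real (degree E i)) = fz n z (\<lambda>i. real (d i)) \<Longrightarrow> ?thesis" for m
  proof (induction m rule: less_induct)
    case (less m E)
    show ?case
    proof (cases "\<forall>i\<in>{1..n}. real (degree E i) \<le> of_int \<lceil>z i\<rceil>")
      case True
      have "degree E \<in> DS n" using less.prems unfolding DS_def by auto
      then show ?thesis using True less.prems by blast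
    next
      case False
      then obtain i where i: "i \<in> {1..n}" "\<not> real (degree E i) \<le> of_int \<lceil>z i\<rceil>" by auto
      obtain E' where E': "simple_graph n E'" "card E' < card E"
        "fz n z (\<lambda>k. real (degree E' k)) \<le> fz n z (\<lambda>k. real (degree E k))"
        using step[of n E i z, OF less.prems(2) i(1) bspec[OF nonneg i(1)] i(2)] by blast
      have "degree E' \<in> DS n" using E'(1) unfolding DS_def by auto
      then have "fz n z (\<lambda>i. real (d i)) \<le> fz n z (\<lambda>k. real (degree E' k))" using dmin by blast
      then have "fz n z (\<lambda>k. real (degree E' k)) = fz n z (\<lambda>i. real (d i))"
        using E'(3) less.prems(3) by linarith
      then show ?thesis using less.IH[OF _ refl E'(1)] E'(2) less.prems(1) by blast
    qed
  qed
  show ?thesis using main[OF refl E0(2)] E0(1) by simp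
qed

end
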